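(* Let $\mathcal{G}\leq\mathrm{Homeo}(M)$ be locally approximating, and let $U,V\in\mathcal{D}_{\mathcal{G}}$. Then $U$ is compactly contained in $V$ if and only if there exists a nonempty $W\in\mathcal{D}_{\mathcal{G}}$ with $W\subseteq V$ such that for every nonempty $\hat W\in\mathcal{D}_{\mathcal{G}}$ with $\hat W\subseteq W$, there is $g\in\mathcal{G}[V]$ with $g(U)\subseteq\hat W$.
   Context: $M$ is a compact, connected topological manifold of positive dimension, possibly with boundary; $\mathrm{Homeo}(M)$ has the compact-open topology; $\mathcal{G}[U]$ is the subgroup of elements of $\mathcal{G}$ acting as the identity on $M\setminus U$. $\mathcal{G}$ is locally approximating if: (1) for every open $U$ with compact closure in a single Euclidean chart and not accumulating on $\partial M$, $\mathcal{G}[U]$ is dense in $\mathrm{Homeo}(M)[U]$; and (2) if $\partial M\neq\emptyset$, either (a) $\mathcal{G}$ consists of compactly supported homeomorphisms of $M\setminus\partial M$, or (b) for every open $U$ with compact closure in a single Euclidean chart, $\mathcal{G}[U]$ is dense in $\mathrm{Homeo}(M)[U]$. The extended support $\mathrm{supp}^e g$ of a homeomorphism $g$ is the interior of the closure of $\{x: g(x)\neq x\}$; $\mathcal{D}_{\mathcal{G}}=\{\mathrm{supp}^e g: g\in\mathcal{G}\}$, a collection of regular open sets (open sets equal to the interior of their closure). A collared ball in $M$ (of dimension $n$) is the image of an embedding of the closed unit ball $B(1)\subset\mathbb{R}^n$ that extends to an embedding of the radius-$2$ ball. $U$ is said to be compactly contained in $V$ if $U$ is contained in a collared ball which is contained in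 the interior of $V$. *)

theory Defs
  imports "HOL-Analysis.Analysis"
begin

text \<open>Model space: the closed half-space of the Euclidean space 'n (dimension DIM('n) \<ge> 1).
  The manifold M is the whole (Hausdorff) type 'a.\<close>

definition hs_vec :: "'n::euclidean_space" where
  "hs_vec = (SOME b. b \<in> Basis)"

definition half_space :: "'n::euclidean_space set" where
  "half_space = {x. 0 \<le> x \<bullet> hs_vec}"

definition chart :: "'a::topological_space set \<Rightarrow> ('a \<Rightarrow> 'n::euclidean_space) \<Rightarrow> bool" where
  "chart C \<phi> \<longleftrightarrow> open C \<and> openin (top_of_set half_space) (\<phi> ` C) \<and>
     (\<exists>\<psi>. homeomorphism C (\<phi> ` C) \<phi> \<psi>)"

definition is_manifold :: "'n::euclidean_space itself \<Rightarrow> 'a::t2_space itself \<Rightarrow> bool" where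
  "is_manifold _ _ \<longleftrightarrow> (\<forall>x::'a. \<exists>C (\<phi>::'a \<Rightarrow> 'n). chart C \<phi> \<and> x \<in> C)"

definition mbdry :: "'n::euclidean_space itself \<Rightarrow> 'a::topological_space set" where
  "mbdry _ = {x. \<exists>C (\<phi>::'a \<Rightarrow> 'n). chart C \<phi> \<and> x \<in> C \<and> \<phi> x \<bullet> hs_vec = 0}"

definition chart_domain :: "'n::euclidean_space itself \<Rightarrow> 'a::topological_space set \<Rightarrow> bool" where
  "chart_domain _ C \<longleftrightarrow> (\<exists>\<phi>::'a \<Rightarrow> 'n. chart C \<phi>)"

definition homeos :: "('a::topological_space \<Rightarrow> 'a) set" where
  "homeos = {f. \<exists>g. homeomorphism UNIV UNIV f g}"

definition is_subgroup_homeo :: "('a::topological_space \<Rightarrow> 'a) set \<Rightarrow> bool" where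
  "is_subgroup_homeo G \<longleftrightarrow> G \<subseteq> homeos \<and> id \<in> G \<and>
     (\<forall>f\<in>G. \<forall>g\<in>G. f \<circ> g \<in> G) \<and> (\<forall>f\<in>G. inv f \<in> G)"

text \<open>G[U]: elements of G acting as the identity on M - U.\<close>
definition rel_supp :: "('a \<Rightarrow> 'a) set \<Rightarrow> 'a set \<Rightarrow> ('a \<Rightarrow> 'a) set" where
  "rel_supp G U = {g \<in> G. \<forall>x. x \<notin> U \<longrightarrow> g x = x}"

definition compact_open :: "('a::topological_space \<Rightarrow> 'a) topology" where
  "compact_open = topology_generated_by {{f. f ` K \<subseteq> Q} | K Q. compact K \<and> open Q}"

definition dense_in_homeo :: "('a::topological_space \<Rightarrow> 'a) set \<Rightarrow> 'a set \<Rightarrow> bool" where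
  "dense_in_homeo G U \<longleftrightarrow>
     rel_supp homeos U \<subseteq> (subtopology compact_open (rel_supp homeos U)) closure_of (rel_supp G U)"

definition locally_approximating :: "'n::euclidean_space itself \<Rightarrow> ('a::topological_space \<Rightarrow> 'a) set \<Rightarrow> bool" where
  "locally_approximating (N::'n itself) (G::('a \<Rightarrow> 'a) set) \<longleftrightarrow>
    (\<forall>U::'a set. open U \<and> compact (closure U) \<and> (\<exists>C::'a set. chart_domain N C \<and> closure U \<subseteq> C)
          \<and> closure U \<inter> mbdry N = {} \<longrightarrow> dense_in_homeo G U) \<and>
    (mbdry N \<noteq> ({}::'a set) \<longrightarrow>
      ((\<forall>g\<in>G. \<exists>K::'a set. compact K \<and> K \<inter> mbdry N = {} \<and> (\<forall>x. x \<notin> K \<longrightarrow> g x = x)) \<or>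
       (\<forall>U::'a set. open U \<and> compact (closure U) \<and> (\<exists>C::'a set. chart_domain N C \<and> closure U \<subseteq> C)
          \<longrightarrow> dense_in_homeo G U)))"

definition ext_supp :: "('a::topological_space \<Rightarrow> 'a) \<Rightarrow> 'a set" where
  "ext_supp g = interior (closure {x. g x \<noteq> x})"

definition D_of :: "('a::topological_space \<Rightarrow> 'a) set \<Rightarrow> 'a set set" where
  "D_of G = ext_supp ` G"

definition collared_ball :: "'n::euclidean_space itself \<Rightarrow> 'a::topological_space set \<Rightarrow> bool" where
  "collared_ball _ B \<longleftrightarrow> (\<exists>(e::'n \<Rightarrow> 'a) e'. homeomorphism (cball 0 2) (e ` cball 0 2) e e'
        \<and> B = e ` cball 0 1)"

definition compactly_contained :: "'n::euclidean_space itself \<Rightarrow> 'a::topological_space set \<Rightarrow> 'a set \<Rightarrow> bool" where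
  "compactly_contained N U V \<longleftrightarrow> (\<exists>B. collared_ball N B \<and> U \<subseteq> B \<and> B \<subseteq> interior V)"

end

theory Submission
  imports Defs
begin

lemma hs_vec_Basis: "(hs_vec::'n::euclidean_space) \<in> Basis"
  unfolding hs_vec_def by (rule someI_ex) (use nonempty_Basis in blast)

lemma hs_vec_inner: "(hs_vec::'n::euclidean_space) \<bullet> hs_vec = 1"
  using hs_vec_Basis inner_Basis by fastforce

lemma chart_nbhd:
  fixes e :: "'n::euclidean_space \<Rightarrow> 'a::topological_space" and \<phi> :: "'a \<Rightarrow> 'n"
  assumes ch: "chart C \<phi>" and S: "open S" "continuous_on S e" "inj_on e S"
    and v: "v \<in> S" "e v \<in> C"
  shows "\<exists>Op. open Op \<and> \<phi> (e v) \<in> Op \<and> Op \<subseteq> \<phi> ` C \<and> open (C \<inter> \<phi> -` Op) \<and> C \<inter> \<phi> -` Op \<subseteq> e ` S"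
proof -
  from ch obtain \<psi> where C: "open C" and hom: "homeomorphism C (\<phi> ` C) \<phi> \<psi>"
    unfolding chart_def by blast
  define S' where "S' = e -` C \<inter> S"
  have oS': "open S'" using S C continuous_on_open_vimage S'_def by blast
  have cphi: "continuous_on C \<phi>" using hom homeomorphism_cont1 by blast
  have injphi: "inj_on \<phi> C" using hom by (metis homeomorphism_apply1 inj_on_inverseI)
  have ce: "continuous_on S' (\<phi> \<circ> e)"
    by (rule continuous_on_compose) (auto intro: continuous_on_subset[OF S(2)] continuous_on_subset[OF cphi] simp: S'_def)
  have ie: "inj_on (\<phi> \<circ> e) S'"
    using S(3) injphi unfolding S'_def inj_on_def by auto
  define Op where "Op = (\<phi> \<circ> e) ` S'"
  have oO: "open Op" unfolding Op_def by (rule invariance_of_domain[OF ce oS' ie])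
  have "open (C \<inter> \<phi> -` Op)"
    using cphi C oO continuous_on_open_vimage by (metis Int_commute)
  moreover have "C \<inter> \<phi> -` Op \<subseteq> e ` S"
  proof
    fix x assume x: "x \<in> C \<inter> \<phi> -` Op"
    then obtain w where w: "w \<in> S'" "\<phi> x = \<phi> (e w)" unfolding Op_def by auto
    then have "x = e w" using injphi x unfolding S'_def inj_on_def by auto
    then show "x \<in> e ` S" using w S'_def by auto
  qed
  moreover have "\<phi> (e v) \<in> Op" using v unfolding Op_def S'_def by auto
  moreover have "Op \<subseteq> \<phi> ` C" unfolding Op_def S'_def by auto
  ultimately show ?thesis using oO by blast
qed

lemma open_embed:
  fixes e :: "'n::euclidean_space \<Rightarrow> 'a::t2_space"
  assumes man: "is_manifold TYPE('n) TYPE('a)"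
    and S: "open S" "continuous_on S e" "inj_on e S"
  shows "open (e ` S)" "e ` S \<inter> mbdry TYPE('n) = {}"
proof -
  show "open (e ` S)"
  proof (subst open_subopen, intro ballI)
    fix x assume "x \<in> e ` S"
    then obtain v where v: "v \<in> S" "x = e v" by auto
    obtain C and \<phi> :: "'a \<Rightarrow> 'n" where ch: "chart C \<phi>" "x \<in> C"
      using man unfolding is_manifold_def by blast
    from chart_nbhd[OF ch(1) S v(1)] ch v obtain Op where
      "open Op" "\<phi> (e v) \<in> Op" "open (C \<inter> \<phi> -` Op)" "C \<inter> \<phi> -` Op \<subseteq> e ` S" by auto
    then show "\<exists>T. open T \<and> x \<in> T \<and> T \<subseteq> e ` S" using ch v by (intro exI[of _ "C \<inter> \<phi> -` Op"]) auto
  qed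
  show "e ` S \<inter> mbdry TYPE('n) = {}"
  proof (rule ccontr)
    assume "e ` S \<inter> mbdry TYPE('n) \<noteq> {}"
    then obtain v C and \<phi> :: "'a \<Rightarrow> 'n" where v: "v \<in> S" and ch: "chart C \<phi>" "e v \<in> C"
      and z: "\<phi> (e v) \<bullet> hs_vec = 0"
      unfolding mbdry_def by blast
    from chart_nbhd[OF ch(1) S v ch(2)] obtain Op where
      Op: "open Op" "\<phi> (e v) \<in> Op" "Op \<subseteq> \<phi> ` C" by auto
    have hs: "\<phi> ` C \<subseteq> half_space" using ch(1) unfolding chart_def by (meson openin_imp_subset)
    obtain d where d: "d > 0" "ball (\<phi> (e v)) d \<subseteq> Op" using Op open_contains_ball by blast
    define y where "y = \<phi> (e v) - (d/2) *\<^sub>R hs_vec"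
    have "y \<in> ball (\<phi> (e v)) d" using d unfolding y_def
      by (simp add: dist_norm norm_Basis[OF hs_vec_Basis])
    then have "y \<in> half_space" using d Op hs by blast
    moreover have "y \<bullet> hs_vec < 0" using d z unfolding y_def by (simp add: inner_diff_left hs_vec_inner)
    ultimately show False unfolding half_space_def by auto
  qed
qed

lemma co_open:
  assumes "compact K" "open Q"
  shows "openin compact_open {f. f ` K \<subseteq> Q}"
  unfolding compact_open_def openin_topology_generated_by_iff
  apply (rule generate_topology_on.Basis)
  apply (rule CollectI)
  apply (intro exI conjI)
    apply (rule refl)
  using assms by auto

lemma co_topspace: "topspace (compact_open :: ('a::topological_space \<Rightarrow> 'a) topology) = UNIV"
proof -
  have "UNIV \<in> {{f::'a\<Rightarrow>'a. f ` K \<subseteq> Q} | K Q. compact K \<and> open Q}"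
    by (rule CollectI, rule exI[of _ "{}"], rule exI[of _ UNIV]) simp
  then show ?thesis unfolding compact_open_def topology_generated_by_topspace
    by (intro top.extremum_uniqueI Union_upper)
qed

lemma approx:
  assumes d: "dense_in_homeo G U" and H: "H \<in> rel_supp homeos U"
    and K: "compact K" and Q: "open Q" and HK: "H ` K \<subseteq> Q"
  shows "\<exists>g \<in> rel_supp G U. g ` K \<subseteq> Q"
proof -
  have "H \<in> (subtopology compact_open (rel_supp homeos U)) closure_of (rel_supp G U)"
    using d H unfolding dense_in_homeo_def by (rule subsetD)
  moreover have "openin (subtopology compact_open (rel_supp homeos U)) ({f. f ` K \<subseteq> Q} \<inter> rel_supp homeos U)"
    unfolding openin_subtopology using co_open[OF K Q] by (intro exI[of _ "{f. f ` K \<subseteq> Q}"]) simp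
  moreover have "H \<in> {f. f ` K \<subseteq> Q} \<inter> rel_supp homeos U" using H HK by simp
  ultimately obtain y where "y \<in> rel_supp G U" "y \<in> {f. f ` K \<subseteq> Q} \<inter> rel_supp homeos U"
    unfolding in_closure_of by meson
  then show ?thesis by blast
qed

lemma chart_from_embed:
  fixes e :: "'n::euclidean_space \<Rightarrow> 'a::t2_space"
  assumes man: "is_manifold TYPE('n) TYPE('a)"
    and hom: "homeomorphism (cball 0 2) (e ` cball 0 2) e e'"
  shows "chart_domain TYPE('n) (e ` ball 0 2)"
proof -
  define b :: 'n where "b = 3 *\<^sub>R hs_vec"
  have h1: "homeomorphism (e ` ball 0 2) (ball 0 2) e' e"
  proof (rule homeomorphism_of_subsets[OF homeomorphism_symD[OF hom]])
    have *: "\<forall>x\<in>ball 0 2. e'(e x) = x" using homeomorphism_apply1[OF hom] by simp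
    have "(\<lambda>x. e'(e x)) ` ball 0 2 = id ` ball 0 2" by (rule image_cong) (use * in simp_all)
    then show "e' ` e ` ball 0 2 = ball 0 2" by (simp add: image_image)
    show "e ` ball 0 2 \<subseteq> e ` cball 0 2" by (rule image_mono) (rule ball_subset_cball)
    show "ball 0 2 \<subseteq> cball (0::'n) 2" by (rule ball_subset_cball)
  qed
  have h2: "homeomorphism (ball 0 2) ((+) b ` ball 0 2) ((+) b) ((+) (-b))"
    using homeomorphism_symD[OF homeomorphism_translation[of b "ball 0 2"]] .
  have h: "homeomorphism (e ` ball 0 2) ((+) b ` ball 0 2) ((+) b \<circ> e') (e \<circ> (+) (-b))"
    by (rule homeomorphism_compose[OF h1 h2])
  have img: "((+) b \<circ> e') ` (e ` ball 0 2) = (+) b ` ball 0 2"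
    using homeomorphism_image1[OF h] .
  have opn: "open ((+) b ` ball 0 (2::real))"
    using open_translation[of "ball 0 2" b] by simp
  have sub: "(+) b ` ball 0 2 \<subseteq> half_space"
  proof
    fix y assume "y \<in> (+) b ` ball 0 (2::real)"
    then obtain v :: 'n where v0: "v \<in> ball 0 2" "y = b + v" by blast
    then have v: "norm v < 2" "y = b + v" by auto
    have "\<bar>v \<bullet> hs_vec\<bar> \<le> norm v * norm (hs_vec::'n)" by (rule Cauchy_Schwarz_ineq2)
    moreover have "norm v * norm (hs_vec::'n) < 2" using v norm_Basis[OF hs_vec_Basis[where 'n='n]] by simp
    ultimately have "\<bar>v \<bullet> hs_vec\<bar> < 2" by linarith
    then show "y \<in> half_space" unfolding half_space_def v b_def
      by (simp add: inner_add_left hs_vec_inner)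
  qed
  have "openin (top_of_set half_space) ((+) b ` ball 0 2)"
    using opn sub unfolding openin_open by (intro exI[of _ "(+) b ` ball 0 2"]) (simp add: Int_absorb1)
  moreover have "open (e ` ball 0 2)"
  proof (rule open_embed(1)[OF man])
    show "continuous_on (ball 0 2) e"
      using homeomorphism_cont1[OF hom] ball_subset_cball by (rule continuous_on_subset)
    show "inj_on e (ball 0 2)"
      by (rule inj_on_inverseI[where g=e']) (use homeomorphism_apply1[OF hom] in simp)
  qed simp
  ultimately have "chart (e ` ball 0 2) ((+) b \<circ> e')" unfolding chart_def img using h by blast
  then show ?thesis unfolding chart_domain_def by blast
qed

lemma hom_cont_e: "homeomorphism S T e e' \<Longrightarrow> continuous_on S e" by (rule homeomorphism_cont1)

lemma embed_props:
  fixes e :: "'n::euclidean_space \<Rightarrow> 'a::t2_space"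
  assumes man: "is_manifold TYPE('n) TYPE('a)"
    and hom: "homeomorphism (cball 0 2) (e ` cball 0 2) e e'" and r: "r \<le> 2"
  shows "open (e ` ball 0 r)" "e ` ball 0 r \<inter> mbdry TYPE('n) = {}" "compact (e ` cball 0 r)"
    "closure (e ` ball 0 r) \<subseteq> e ` cball 0 r" "compact (closure (e ` ball 0 r))"
proof -
  have sub: "ball (0::'n) r \<subseteq> cball 0 2" "cball (0::'n) r \<subseteq> cball 0 2" using r by auto
  have c: "continuous_on (ball 0 r) e" using homeomorphism_cont1[OF hom] sub(1) by (rule continuous_on_subset)
  have i: "inj_on e (ball 0 r)"
    by (rule inj_on_inverseI[where g=e']) (use homeomorphism_apply1[OF hom] sub(1) in blast)
  show "open (e ` ball 0 r)" "e ` ball 0 r \<inter> mbdry TYPE('n) = {}"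
    using open_embed[OF man open_ball c i] by auto
  show cp: "compact (e ` cball 0 r)"
    by (rule compact_continuous_image[OF continuous_on_subset[OF homeomorphism_cont1[OF hom] sub(2)] compact_cball])
  show cl: "closure (e ` ball 0 r) \<subseteq> e ` cball 0 r"
    by (rule closure_minimal) (use compact_imp_closed[OF cp] in auto)
  have "closure (e ` ball 0 r) = closure (e ` ball 0 r) \<inter> e ` cball 0 r" using cl by blast
  then show "compact (closure (e ` ball 0 r))"
    using compact_Int_closed[OF cp closed_closure] by (metis inf_commute)
qed

lemma dense_ball:
  fixes e :: "'n::euclidean_space \<Rightarrow> 'a::t2_space"
  assumes man: "is_manifold TYPE('n) TYPE('a)" and la: "locally_approximating TYPE('n) G"
    and hom: "homeomorphism (cball 0 2) (e ` cball 0 2) e e'" and r: "r < 2"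
  shows "dense_in_homeo G (e ` ball 0 r)"
proof -
  have r2: "r \<le> 2" using r by simp
  note P = embed_props[OF man hom r2] embed_props[OF man hom order.refl]
  have s: "closure (e ` ball 0 r) \<subseteq> e ` ball 0 2"
    by (rule order_trans[OF P(4)]) (rule image_mono, use r in auto)
  have b: "closure (e ` ball 0 r) \<inter> mbdry TYPE('n) = {}"
    using s P(7) by blast
  have ch: "\<exists>C::'a set. chart_domain TYPE('n) C \<and> closure (e ` ball 0 r) \<subseteq> C"
    using chart_from_embed[OF man hom] s by blast
  have "\<forall>U::'a set. open U \<and> compact (closure U) \<and> (\<exists>C::'a set. chart_domain TYPE('n) C \<and> closure U \<subseteq> C)
          \<and> closure U \<inter> mbdry TYPE('n) = {} \<longrightarrow> dense_in_homeo G U"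
    using la unfolding locally_approximating_def by (rule conjunct1)
  then have "open (e ` ball 0 r) \<and> compact (closure (e ` ball 0 r)) \<and> (\<exists>C::'a set. chart_domain TYPE('n) C \<and> closure (e ` ball 0 r) \<subseteq> C)
          \<and> closure (e ` ball 0 r) \<inter> mbdry TYPE('n) = {} \<longrightarrow> dense_in_homeo G (e ` ball 0 r)"
    by (rule spec)
  then show ?thesis using P(1,5) ch b by blast
qed

lemma cont_transfer:
  fixes e :: "'n::euclidean_space \<Rightarrow> 'a::t2_space"
  assumes man: "is_manifold TYPE('n) TYPE('a)"
    and hom: "homeomorphism (cball 0 2) (e ` cball 0 2) e e'"
    and fc: "continuous_on (cball 0 2) f" and fi: "f ` cball 0 2 \<subseteq> cball 0 2" and r: "r < 2"
    and fx: "\<forall>v\<in>cball 0 2. r < norm v \<longrightarrow> f v = v"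
  shows "continuous_on UNIV (\<lambda>x. if x \<in> e ` cball 0 2 then e (f (e' x)) else x)"
proof -
  let ?H = "\<lambda>x. if x \<in> e ` cball 0 2 then e (f (e' x)) else x"
  have r2: "r \<le> 2" using r by simp
  note P = embed_props[OF man hom r2] embed_props[OF man hom order.refl]
  have o1: "open (e ` ball 0 2)" using P(6) .
  have o2: "open (- e ` cball 0 r)" using compact_imp_closed[OF P(3)] by (simp add: open_Compl)
  have U: "e ` ball 0 2 \<union> (- e ` cball 0 r) = UNIV"
  proof -
    have "e ` cball 0 r \<subseteq> e ` ball 0 2" using r by (intro image_mono) auto
    then show ?thesis by blast
  qed
  have e'c: "continuous_on (e ` cball 0 2) e'" using homeomorphism_cont2[OF hom] .
  have ec: "continuous_on (cball 0 2) e" using homeomorphism_cont1[OF hom] .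
  have e'i: "e' ` e ` ball 0 2 \<subseteq> cball 0 2"
  proof clarify
    fix v :: 'n assume "v \<in> ball 0 2"
    then show "e' (e v) \<in> cball 0 2" using homeomorphism_apply1[OF hom, of v] by simp
  qed
  have c1: "continuous_on (e ` ball 0 2) (e \<circ> f \<circ> e')"
  proof -
    have a: "continuous_on (e ` ball 0 2) e'"
      using e'c by (rule continuous_on_subset) (intro image_mono ball_subset_cball)
    have b: "continuous_on (e' ` e ` ball 0 2) f" using fc e'i by (rule continuous_on_subset)
    have c: "continuous_on (f ` e' ` e ` ball 0 2) e"
      by (rule continuous_on_subset[OF ec]) (use fi e'i in blast)
    have "continuous_on (e ` ball 0 2) (f \<circ> e')" using continuous_on_compose[OF a b] .
    moreover have "continuous_on ((f \<circ> e') ` e ` ball 0 2) e" using c by (simp add: image_comp)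
    ultimately show ?thesis using continuous_on_compose by (metis comp_assoc)
  qed
  have "continuous_on (e ` ball 0 2) ?H"
    by (rule continuous_on_eq[OF c1]) auto
  moreover have "continuous_on (- e ` cball 0 r) ?H"
  proof (rule continuous_on_eq[OF continuous_on_id])
    fix x assume x: "x \<in> - e ` cball 0 r"
    show "x = ?H x"
    proof (cases "x \<in> e ` cball 0 2")
      case True
      then obtain v where v: "v \<in> cball 0 2" "x = e v" by auto
      then have "r < norm v" using x by auto
      then show ?thesis using v fx homeomorphism_apply1[OF hom] by auto
    qed auto
  qed
  ultimately have "continuous_on (e ` ball 0 2 \<union> (- e ` cball 0 r)) ?H"
    by (rule continuous_on_open_Un[OF o1 o2])
  then show ?thesis using U by (simp only:)
qed

lemma transfer:
  fixes e :: "'n::euclidean_space \<Rightarrow> 'a::t2_space"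
  assumes man: "is_manifold TYPE('n) TYPE('a)"
    and hom: "homeomorphism (cball 0 2) (e ` cball 0 2) e e'"
    and f: "homeomorphism (cball 0 2) (cball 0 2) f f'" and r: "r < 2"
    and fx: "\<forall>v\<in>cball 0 2. r < norm v \<longrightarrow> f v = v \<and> f' v = v"
  shows "\<exists>H. H \<in> homeos \<and> (\<forall>x. x \<notin> e ` cball 0 r \<longrightarrow> H x = x) \<and> (\<forall>v \<in> cball 0 2. H (e v) = e (f v))"
proof -
  define H where "H = (\<lambda>x. if x \<in> e ` cball 0 2 then e (f (e' x)) else x)"
  define H' where "H' = (\<lambda>x. if x \<in> e ` cball 0 2 then e (f' (e' x)) else x)"
  have cH: "continuous_on UNIV H" unfolding H_def
    by (rule cont_transfer[OF man hom homeomorphism_cont1[OF f] _ r]) (use homeomorphism_image1[OF f] homeomorphism_image2[OF f] fx in simp_all)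
  have cH': "continuous_on UNIV H'" unfolding H'_def
    by (rule cont_transfer[OF man hom homeomorphism_cont2[OF f] _ r]) (use homeomorphism_image1[OF f] homeomorphism_image2[OF f] fx in simp_all)
  have a1: "\<And>v. v \<in> cball 0 2 \<Longrightarrow> e' (e v) = v" using homeomorphism_apply1[OF hom] by blast
  have fi: "\<And>v. v \<in> cball 0 2 \<Longrightarrow> f v \<in> cball 0 2" "\<And>v. v \<in> cball 0 2 \<Longrightarrow> f' v \<in> cball 0 2"
    using f unfolding homeomorphism_def by blast+
  have ff: "\<And>v. v \<in> cball 0 2 \<Longrightarrow> f' (f v) = v" "\<And>v. v \<in> cball 0 2 \<Longrightarrow> f (f' v) = v"
    using f unfolding homeomorphism_def by blast+
  have inv1: "H' (H x) = x" for x
  proof (cases "x \<in> e ` cball 0 2")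
    case True
    then obtain v where v: "v \<in> cball 0 2" "x = e v" by auto
    then show ?thesis unfolding H_def H'_def using a1 fi ff by auto
  qed (simp add: H_def H'_def)
  have inv2: "H (H' x) = x" for x
  proof (cases "x \<in> e ` cball 0 2")
    case True
    then obtain v where v: "v \<in> cball 0 2" "x = e v" by auto
    then show ?thesis unfolding H_def H'_def using a1 fi ff by auto
  qed (simp add: H_def H'_def)
  have "homeomorphism UNIV UNIV H H'"
    unfolding homeomorphism_def using cH cH' inv1 inv2 surjI[of H' H] surjI[of H H'] by simp
  then have "H \<in> homeos" unfolding homeos_def by blast
  moreover have "\<forall>x. x \<notin> e ` cball 0 r \<longrightarrow> H x = x"
  proof (intro allI impI)
    fix x assume x: "x \<notin> e ` cball 0 r"
    show "H x = x"
    proof (cases "x \<in> e ` cball 0 2")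
      case True
      then obtain v where v: "v \<in> cball 0 2" "x = e v" by auto
      then have "r < norm v" using x by auto
      then show ?thesis unfolding H_def using v fx a1 by auto
    qed (simp add: H_def)
  qed
  moreover have "\<forall>v \<in> cball 0 2. H (e v) = e (f v)" unfolding H_def using a1 by auto
  ultimately show ?thesis by blast
qed

lemma shrink:
  fixes a r \<epsilon> :: real
  assumes a: "0 < a" "a < r" "r \<le> 2" and e: "0 < \<epsilon>" "\<epsilon> < a"
  shows "\<exists>h h'. homeomorphism (cball (0::'n::euclidean_space) 2) (cball 0 2) h h' \<and>
     (\<forall>v\<in>cball 0 2. r < norm v \<longrightarrow> h v = v \<and> h' v = v) \<and> h ` cball 0 a \<subseteq> cball 0 \<epsilon>"
proof -
  define k where "k = \<epsilon> / a"
  have k: "0 < k" "k < 1" using a e unfolding k_def by auto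
  define c where "c t = min 1 (max k (k + (1 - k) * (t - a) / (r - a)))" for t
  have cc: "continuous_on UNIV c" unfolding c_def by (intro continuous_intros) (use a in auto)
  have cpos: "k \<le> c t" "c t \<le> 1" for t unfolding c_def using k by auto
  have cmono: "c s \<le> c t" if "s \<le> t" for s t
  proof -
    have "(1 - k) * (s - a) / (r - a) \<le> (1 - k) * (t - a) / (r - a)"
      using that k a by (intro divide_right_mono mult_left_mono) auto
    then show ?thesis unfolding c_def by linarith
  qed
  have ca: "c t = k" if "t \<le> a" for t
  proof -
    have "(1 - k) * (t - a) / (r - a) \<le> 0"
      using that k a by (intro divide_nonpos_pos mult_nonneg_nonpos) auto
    then show ?thesis unfolding c_def using k by auto
  qed
  have cr: "c t = 1" if "r \<le> t" for t
  proof -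
    have "(1 - k) * (r - a) \<le> (1 - k) * (t - a)" using that k by (intro mult_left_mono) auto
    then have "(1 - k) * (r - a) / (r - a) \<le> (1 - k) * (t - a) / (r - a)" using a by (intro divide_right_mono) auto
    then have "(1 - k) * (t - a) / (r - a) \<ge> (1 - k)" using a by simp
    then show ?thesis unfolding c_def using k by auto
  qed
  define \<rho> where "\<rho> t = t * c t" for t
  have \<rho>mono: "\<rho> s < \<rho> t" if "0 \<le> s" "s < t" for s t
  proof -
    have "s * c s \<le> s * c t" using that cmono by (intro mult_left_mono) auto
    also have "\<dots> < t * c t" using that cpos[of t] k by (intro mult_strict_right_mono) auto
    finally show ?thesis unfolding \<rho>_def .
  qed
  have \<rho>inj: "s = t" if "0 \<le> s" "0 \<le> t" "\<rho> s = \<rho> t" for s t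
    using \<rho>mono[of s t] \<rho>mono[of t s] that by fastforce
  define h :: "'n \<Rightarrow> 'n" where "h v = c (norm v) *\<^sub>R v" for v
  have nh: "norm (h v) = \<rho> (norm v)" for v
    unfolding h_def \<rho>_def using cpos[of "norm v"] k by (simp add: mult.commute)
  have hc: "continuous_on (cball 0 2) h" unfolding h_def
    by (intro continuous_intros continuous_on_compose2[OF cc]) auto
  have hinj: "inj_on h (cball 0 2)"
  proof (rule inj_onI)
    fix v w assume "v \<in> cball (0::'n) 2" "w \<in> cball (0::'n) 2" "h v = h w"
    then have "\<rho> (norm v) = \<rho> (norm w)" using nh by metis
    then have "norm v = norm w" using \<rho>inj by simp
    then have "c (norm v) *\<^sub>R v = c (norm v) *\<^sub>R w" using \<open>h v = h w\<close> unfolding h_def by simp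
    then show "v = w" using cpos[of "norm v"] k by simp
  qed
  have \<rho>le: "\<rho> t \<le> t" if "0 \<le> t" for t unfolding \<rho>_def using cpos[of t] that
    by (simp add: mult_left_le)
  have himg: "h ` cball 0 2 = cball 0 2"
  proof
    show "h ` cball 0 2 \<subseteq> cball 0 2"
      using nh \<rho>le by (force intro: order_trans[OF \<rho>le])
    show "cball 0 2 \<subseteq> h ` cball 0 2"
    proof
      fix y :: 'n assume y: "y \<in> cball 0 2"
      show "y \<in> h ` cball 0 2"
      proof (cases "y = 0")
        case True
        then show ?thesis unfolding h_def by (intro image_eqI[of _ _ 0]) auto
      next
        case False
        have "continuous_on {0..2} \<rho>" unfolding \<rho>_def
          by (intro continuous_intros continuous_on_subset[OF cc]) auto
        moreover have "\<rho> 0 \<le> norm y" "norm y \<le> \<rho> 2" using y cr[of 2] a unfolding \<rho>_def by auto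
        ultimately obtain t where t: "0 \<le> t" "t \<le> 2" "\<rho> t = norm y"
          using IVT'[of \<rho> 0 "norm y" 2] by auto
        define v where "v = (t / norm y) *\<^sub>R y"
        have nv: "norm v = t" unfolding v_def using False t by simp
        have "h v = (c t * (t / norm y)) *\<^sub>R y" unfolding h_def nv by (simp add: v_def)
        also have "\<dots> = y" using t False unfolding \<rho>_def by (simp add: field_simps)
        finally show ?thesis using nv t by (intro image_eqI[of _ _ v]) auto
      qed
    qed
  qed
  obtain h' where hh: "homeomorphism (cball 0 2) (cball 0 2) h h'"
    using homeomorphism_compact[OF compact_cball hc himg hinj] by blast
  have fx: "\<forall>v\<in>cball 0 2. r < norm v \<longrightarrow> h v = v \<and> h' v = v"
  proof (intro ballI impI)
    fix v :: 'n assume v: "v \<in> cball 0 2" "r < norm v"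
    then have hv: "h v = v" unfolding h_def using cr[of "norm v"] by simp
    moreover have "h' v = v" using homeomorphism_apply1[OF hh v(1)] hv by simp
    ultimately show "h v = v \<and> h' v = v" by simp
  qed
  have "h ` cball 0 a \<subseteq> cball 0 \<epsilon>"
  proof clarify
    fix v :: 'n assume "v \<in> cball 0 a"
    then have "norm v \<le> a" by simp
    then have "norm (h v) = k * norm v" unfolding nh \<rho>_def using ca by simp
    also have "\<dots> \<le> k * a" using \<open>norm v \<le> a\<close> k by (intro mult_left_mono) auto
    also have "\<dots> = \<epsilon>" unfolding k_def using a by simp
    finally show "h v \<in> cball 0 \<epsilon>" by simp
  qed
  then show ?thesis using hh fx by blast
qed

lemma moving:
  fixes p :: "'n::euclidean_space"
  assumes "norm p < r" "r \<le> 2"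
  shows "\<exists>f f'. homeomorphism (cball (0::'n) 2) (cball 0 2) f f' \<and>
     (\<forall>v\<in>cball 0 2. r < norm v \<longrightarrow> f v = v \<and> f' v = v) \<and> f 0 = p"
proof -
  have r: "0 < r" using assms norm_ge_zero[of p] by linarith
  have ah: "affine hull ball (0::'n) r = UNIV" using r by (simp add: affine_hull_open)
  obtain f g where fg: "homeomorphism (cball (0::'n) 2) (cball 0 2) f g" "f 0 = p"
    "{x. \<not> (f x = x \<and> g x = x)} \<subseteq> ball 0 r"
    by (rule homeomorphism_moving_point[of "ball 0 r" "cball 0 2" 0 p]) (use assms r ah in auto)
  have "\<forall>v\<in>cball 0 2. r < norm v \<longrightarrow> f v = v \<and> g v = v" using fg(3) by auto
  then show ?thesis using fg by blast
qed

lemma nontrivial: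
  fixes e :: "'n::euclidean_space \<Rightarrow> 'a::t2_space"
  assumes man: "is_manifold TYPE('n) TYPE('a)" and la: "locally_approximating TYPE('n) G"
    and GH: "G \<subseteq> homeos"
    and hom: "homeomorphism (cball 0 2) (e ` cball 0 2) e e'" and \<rho>: "0 < \<rho>" "\<rho> < 2"
  shows "\<exists>g \<in> rel_supp G (e ` ball 0 \<rho>). ext_supp g \<noteq> {} \<and> ext_supp g \<subseteq> e ` cball 0 \<rho>"
proof -
  define r where "r = \<rho> / 2"
  define p :: 'n where "p = (r/2) *\<^sub>R hs_vec"
  have r: "0 < r" "r < \<rho>" "r < 2" "r \<le> 2" using \<rho> unfolding r_def by auto
  have np: "norm p = r / 2" unfolding p_def using norm_Basis[OF hs_vec_Basis[where 'n='n]] r by simp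
  obtain f f' where f: "homeomorphism (cball (0::'n) 2) (cball 0 2) f f'"
    "\<forall>v\<in>cball 0 2. r < norm v \<longrightarrow> f v = v \<and> f' v = v" "f 0 = p"
    using moving[of p r] np r by auto
  obtain H where H: "H \<in> homeos" "\<forall>x. x \<notin> e ` cball 0 r \<longrightarrow> H x = x" "\<forall>v \<in> cball 0 2. H (e v) = e (f v)"
    using transfer[OF man hom f(1) r(3) f(2)] by blast
  have pc: "p \<in> cball 0 2" "(0::'n) \<in> cball 0 2" using np r by auto
  have "p \<noteq> 0" using np r by auto
  then have ne: "e p \<noteq> e 0" using homeomorphism_apply1[OF hom pc(1)] homeomorphism_apply1[OF hom pc(2)] by metis
  have He: "H (e 0) = e p" using H(3) pc f(3) by simp
  have sub: "e ` cball 0 r \<subseteq> e ` ball 0 \<rho>" using r by (intro image_mono) auto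
  have Hr: "H \<in> rel_supp homeos (e ` ball 0 \<rho>)" unfolding rel_supp_def using H(1,2) sub by blast
  obtain g where g: "g \<in> rel_supp G (e ` ball 0 \<rho>)" "g ` {e 0} \<subseteq> - {e 0}"
  proof -
    have "H ` {e 0} \<subseteq> - {e 0}" using He ne by simp
    then show ?thesis using approx[OF dense_ball[OF man la hom \<rho>(2)] Hr compact_sing[of "e 0"] open_Compl[OF closed_singleton[of "e 0"]]]
      that by blast
  qed
  have gG: "g \<in> homeos" using g(1) GH unfolding rel_supp_def by blast
  then obtain gi where "homeomorphism UNIV UNIV g gi" unfolding homeos_def by blast
  then have gc: "continuous_on UNIV g" by (rule homeomorphism_cont1)
  have os: "open {x. g x \<noteq> id x}" by (rule open_Collect_neq[OF gc continuous_on_id'])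
  have "e 0 \<in> {x. g x \<noteq> id x}" using g(2) by auto
  moreover have "{x. g x \<noteq> id x} \<subseteq> ext_supp g" unfolding ext_supp_def
    by (rule interior_maximal) (use os closure_subset[of "{x. g x \<noteq> id x}"] in simp_all)
  ultimately have "ext_supp g \<noteq> {}" by blast
  moreover have "ext_supp g \<subseteq> e ` cball 0 \<rho>"
  proof -
    have "e ` ball 0 \<rho> \<subseteq> e ` cball 0 \<rho>" by (intro image_mono ball_subset_cball)
    moreover have "\<forall>x. x \<notin> e ` ball 0 \<rho> \<longrightarrow> g x = x" using g(1) unfolding rel_supp_def by blast
    ultimately have "{x. g x \<noteq> x} \<subseteq> e ` cball 0 \<rho>" by blast
    moreover have "closed (e ` cball 0 \<rho>)"
      using compact_imp_closed[OF embed_props(3)[OF man hom]] \<rho> by simp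
    ultimately have "closure {x. g x \<noteq> x} \<subseteq> e ` cball 0 \<rho>"
      by (rule closure_minimal)
    then show ?thesis unfolding ext_supp_def using interior_subset[of "closure {x. g x \<noteq> x}"] by blast
  qed
  ultimately show ?thesis using g(1) by blast
qed

lemma embed_in_open:
  fixes W :: "'a::t2_space set"
  assumes man: "is_manifold TYPE('n::euclidean_space) TYPE('a)" and W: "open W" "W \<noteq> {}"
  shows "\<exists>(e::'n \<Rightarrow> 'a) e'. homeomorphism (cball 0 2) (e ` cball 0 2) e e' \<and> e ` cball 0 2 \<subseteq> W"
proof -
  obtain x where x: "x \<in> W" using W by blast
  obtain C and \<phi> :: "'a \<Rightarrow> 'n" where ch: "chart C \<phi>" "x \<in> C"
    using man unfolding is_manifold_def by blast
  from ch obtain \<psi> where C: "open C" and hom: "homeomorphism C (\<phi> ` C) \<phi> \<psi>"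
    and oC: "openin (top_of_set half_space) (\<phi> ` C)"
    unfolding chart_def by blast
  have "openin (top_of_set C) (C \<inter> W)" using W(1) by (rule openin_open_Int)
  then have "openin (top_of_set (\<phi> ` C)) (\<phi> ` (C \<inter> W))" by (rule homeomorphism_imp_open_map[OF hom])
  then have "openin (top_of_set half_space) (\<phi> ` (C \<inter> W))" using oC by (rule openin_trans)
  then obtain Op where Op: "open Op" "\<phi> ` (C \<inter> W) = half_space \<inter> Op" unfolding openin_open by blast
  define y where "y = \<phi> x"
  have yO: "y \<in> Op" "y \<in> half_space" using Op x ch(2) unfolding y_def by blast+
  obtain \<delta> where \<delta>: "\<delta> > 0" "ball y \<delta> \<subseteq> Op" using Op(1) yO(1) open_contains_ball by blast
  define b :: 'n where "b = hs_vec"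
  have nb: "norm b = 1" "b \<bullet> b = 1" unfolding b_def using norm_Basis[OF hs_vec_Basis[where 'n='n]] hs_vec_inner by auto
  define y1 where "y1 = y + (\<delta>/2) *\<^sub>R b"
  define sc where "sc = \<delta> / 8"
  have cb: "cball y1 (2 * sc) \<subseteq> \<phi> ` (C \<inter> W)"
  proof
    fix z assume z: "z \<in> cball y1 (2 * sc)"
    then have dz: "norm (z - y1) \<le> \<delta>/4" unfolding sc_def by (simp add: dist_norm norm_minus_commute)
    have "norm (z - y) \<le> norm (z - y1) + norm (y1 - y)"
      using norm_triangle_ineq[of "z - y1" "y1 - y"] by simp
    also have "norm (y1 - y) = \<delta>/2" unfolding y1_def using nb \<delta> by simp
    finally have "norm (z - y) < \<delta>" using dz \<delta> by linarith
    then have "z \<in> Op" using \<delta>(2) by (auto simp: dist_norm norm_minus_commute)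
    moreover have "z \<in> half_space"
    proof -
      have "\<bar>(z - y1) \<bullet> b\<bar> \<le> norm (z - y1) * norm b" by (rule Cauchy_Schwarz_ineq2)
      then have "\<bar>(z - y1) \<bullet> b\<bar> \<le> \<delta>/4" using dz nb by simp
      moreover have "z \<bullet> b = y \<bullet> b + \<delta>/2 + (z - y1) \<bullet> b"
        unfolding y1_def using nb by (simp add: inner_diff_left inner_add_left)
      moreover have "y \<bullet> b \<ge> 0" using yO(2) unfolding half_space_def b_def by simp
      ultimately have "z \<bullet> b \<ge> 0" using \<delta> by linarith
      then show ?thesis unfolding half_space_def b_def by simp
    qed
    ultimately show "z \<in> \<phi> ` (C \<inter> W)" using Op(2) by blast
  qed
  define e :: "'n \<Rightarrow> 'a" where "e v = \<psi> (y1 + sc *\<^sub>R v)" for v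
  have aff: "(\<lambda>v. y1 + sc *\<^sub>R v) ` cball 0 2 \<subseteq> \<phi> ` (C \<inter> W)"
  proof clarify
    fix v :: 'n assume "v \<in> cball 0 2"
    then have "norm (sc *\<^sub>R v) \<le> 2 * sc" using \<delta> unfolding sc_def by (simp add: mult.commute)
    then have "y1 + sc *\<^sub>R v \<in> cball y1 (2 * sc)" by (simp add: dist_norm)
    then show "y1 + sc *\<^sub>R v \<in> \<phi> ` (C \<inter> W)" using cb by blast
  qed
  have aff2: "(\<lambda>v. y1 + sc *\<^sub>R v) ` cball 0 2 \<subseteq> \<phi> ` C" using aff by blast
  have ec: "continuous_on (cball 0 2) e" unfolding e_def
    by (rule continuous_on_compose2[OF homeomorphism_cont2[OF hom] _ aff2]) (intro continuous_intros)
  have ei: "inj_on e (cball 0 2)"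
  proof (rule inj_onI)
    fix v w :: 'n assume vw: "v \<in> cball 0 2" "w \<in> cball 0 2" "e v = e w"
    have "\<phi> (e v) = y1 + sc *\<^sub>R v" unfolding e_def using homeomorphism_apply2[OF hom] aff2 vw(1) by blast
    moreover have "\<phi> (e w) = y1 + sc *\<^sub>R w" unfolding e_def using homeomorphism_apply2[OF hom] aff2 vw(2) by blast
    ultimately have "y1 + sc *\<^sub>R v = y1 + sc *\<^sub>R w" using vw(3) by argo
    then have "v = w \<or> sc = 0" by simp
    then show "v = w" using \<delta> unfolding sc_def by simp
  qed
  obtain e' where "homeomorphism (cball 0 2) (e ` cball 0 2) e e'"
    using homeomorphism_compact[OF compact_cball ec refl ei] by blast
  moreover have "e ` cball 0 2 \<subseteq> W"
  proof clarify
    fix v :: 'n assume "v \<in> cball 0 2"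
    then obtain z where z: "z \<in> C \<inter> W" "y1 + sc *\<^sub>R v = \<phi> z" using aff by blast
    then have "e v = z" unfolding e_def using homeomorphism_apply1[OF hom] by simp
    then show "e v \<in> W" using z by blast
  qed
  ultimately show ?thesis by blast
qed

theorem lemma2p2:
  fixes G :: "('a::t2_space \<Rightarrow> 'a) set" and U V :: "'a set"
  assumes "is_manifold TYPE('n::euclidean_space) TYPE('a)"
    and "compact (UNIV :: 'a set)" and "connected (UNIV :: 'a set)"
    and "is_subgroup_homeo G"
    and "locally_approximating TYPE('n) G"
    and "U \<in> D_of G" and "V \<in> D_of G"
  shows "compactly_contained TYPE('n) U V \<longleftrightarrow>
    (\<exists>W \<in> D_of G. W \<noteq> {} \<and> W \<subseteq> V \<and>
       (\<forall>W' \<in> D_of G. W' \<noteq> {} \<and> W' \<subseteq> W \<longrightarrow> (\<exists>g \<in> rel_supp G V. g ` U \<subseteq> W')))"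
proof -
  note man = assms(1) and la = assms(5)
  have GH: "G \<subseteq> homeos" using assms(4) unfolding is_subgroup_homeo_def by blast
  have Dopen: "open X" if "X \<in> D_of G" for X
    using that unfolding D_of_def ext_supp_def by auto
  have oV: "open V" using Dopen assms(7) .
  then have iV: "interior V = V" by (rule interior_open)
  show ?thesis
  proof
    assume "compactly_contained TYPE('n) U V"
    then obtain B where B: "collared_ball TYPE('n) B" "U \<subseteq> B" "B \<subseteq> V"
      unfolding compactly_contained_def iV by blast
    then obtain e :: "'n \<Rightarrow> 'a" and e' where hom: "homeomorphism (cball 0 2) (e ` cball 0 2) e e'"
      and Be: "B = e ` cball 0 1"
      unfolding collared_ball_def by blast
    have ec2: "continuous_on (ball 0 2) e"
      using homeomorphism_cont1[OF hom] ball_subset_cball by (rule continuous_on_subset)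
    define O1 where "O1 = e -` V \<inter> ball 0 2"
    have oO1: "open O1" unfolding O1_def using ec2 oV continuous_on_open_vimage[OF open_ball] by blast
    have cO1: "cball 0 1 \<subseteq> O1" unfolding O1_def using B(3) Be by auto
    obtain \<epsilon> where \<epsilon>: "\<epsilon> > 0" "(\<Union>x\<in>cball 0 1. ball x \<epsilon>) \<subseteq> O1"
      using compact_subset_open_imp_ball_epsilon_subset[OF compact_cball oO1 cO1] by blast
    define R where "R = 1 + min \<epsilon> 1 / 2"
    have R: "1 < R" "R < 2" "R - 1 < \<epsilon>" unfolding R_def using \<epsilon> by auto
    have cR: "cball 0 R \<subseteq> O1"
    proof
      fix v :: 'n assume v: "v \<in> cball 0 R"
      define x where "x = (1/R) *\<^sub>R v"
      have "norm x \<le> 1" unfolding x_def using v R by (simp add: field_simps)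
      moreover have "dist x v < \<epsilon>"
      proof -
        have "v - x = (1 - 1/R) *\<^sub>R v" unfolding x_def by (simp add: algebra_simps)
        then have "norm (v - x) = (1 - 1/R) * norm v" using R by simp
        also have "\<dots> \<le> (1 - 1/R) * R" using v R by (intro mult_left_mono) auto
        also have "\<dots> = R - 1" using R by (simp add: field_simps)
        finally show ?thesis using R by (simp add: dist_norm norm_minus_commute)
      qed
      ultimately have "x \<in> cball 0 1" "v \<in> ball x \<epsilon>" by auto
      then show "v \<in> O1" using \<epsilon>(2) by blast
    qed
    have eRV: "e ` cball 0 R \<subseteq> V" using cR unfolding O1_def by auto
    define r where "r = (1 + R) / 2"
    have r: "1 < r" "r < R" "r < 2" "r \<le> 2" using R unfolding r_def by auto
    obtain g0 where g0: "g0 \<in> rel_supp G (e ` ball 0 1)" "ext_supp g0 \<noteq> {}" "ext_supp g0 \<subseteq> e ` cball 0 1"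
      using nontrivial[OF man la GH hom, of 1] by auto
    have c1R: "e ` cball 0 1 \<subseteq> e ` cball 0 R" using R by (intro image_mono) auto
    show "\<exists>W \<in> D_of G. W \<noteq> {} \<and> W \<subseteq> V \<and>
       (\<forall>W' \<in> D_of G. W' \<noteq> {} \<and> W' \<subseteq> W \<longrightarrow> (\<exists>g \<in> rel_supp G V. g ` U \<subseteq> W'))"
    proof (intro bexI[of _ "ext_supp g0"] conjI ballI impI)
      show "ext_supp g0 \<in> D_of G" using g0(1) unfolding D_of_def rel_supp_def by blast
      show "ext_supp g0 \<noteq> {}" by (rule g0(2))
      show "ext_supp g0 \<subseteq> V" using g0(3) c1R eRV by blast
      fix W' assume W': "W' \<in> D_of G" "W' \<noteq> {} \<and> W' \<subseteq> ext_supp g0"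
      have oW': "open W'" using Dopen W'(1) .
      obtain q where q: "q \<in> W'" using W' by blast
      then obtain p where p: "p \<in> cball 0 1" "q = e p" using W' g0(3) by blast
      define S0 where "S0 = e -` W' \<inter> ball 0 2"
      have oS0: "open S0" unfolding S0_def using ec2 oW' continuous_on_open_vimage[OF open_ball] by blast
      have np: "norm p < r" using p r by simp
      obtain f1 f1' where f1: "homeomorphism (cball (0::'n) 2) (cball 0 2) f1 f1'"
        "\<forall>v\<in>cball 0 2. r < norm v \<longrightarrow> f1 v = v \<and> f1' v = v" "f1 0 = p"
        using moving[OF np r(4)] by blast
      have fc: "continuous_on (ball 0 2) f1"
        using homeomorphism_cont1[OF f1(1)] ball_subset_cball by (rule continuous_on_subset)
      have "open (f1 -` S0 \<inter> ball 0 2)" using fc oS0 continuous_on_open_vimage[OF open_ball] by blast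
      moreover have "0 \<in> f1 -` S0 \<inter> ball 0 2" using f1(3) q p unfolding S0_def using r by auto
      ultimately obtain \<epsilon>0 where \<epsilon>0: "\<epsilon>0 > 0" "ball 0 \<epsilon>0 \<subseteq> f1 -` S0 \<inter> ball 0 2"
        using open_contains_ball by blast
      define \<epsilon>1 where "\<epsilon>1 = min (\<epsilon>0/2) (1/2)"
      have \<epsilon>1: "0 < \<epsilon>1" "\<epsilon>1 < 1" "cball 0 \<epsilon>1 \<subseteq> ball (0::'n) \<epsilon>0" unfolding \<epsilon>1_def using \<epsilon>0 by auto
      obtain h h' where h: "homeomorphism (cball (0::'n) 2) (cball 0 2) h h'"
        "\<forall>v\<in>cball 0 2. r < norm v \<longrightarrow> h v = v \<and> h' v = v" "h ` cball 0 1 \<subseteq> cball 0 \<epsilon>1"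
        using shrink[of 1 r \<epsilon>1] r \<epsilon>1 by auto
      have F: "homeomorphism (cball (0::'n) 2) (cball 0 2) (f1 \<circ> h) (h' \<circ> f1')"
        by (rule homeomorphism_compose[OF h(1) f1(1)])
      have Ffx: "\<forall>v\<in>cball 0 2. r < norm v \<longrightarrow> (f1 \<circ> h) v = v \<and> (h' \<circ> f1') v = v"
        using f1(2) h(2) by auto
      obtain H where H: "H \<in> homeos" "\<forall>x. x \<notin> e ` cball 0 r \<longrightarrow> H x = x"
        "\<forall>v \<in> cball 0 2. H (e v) = e ((f1 \<circ> h) v)"
        using transfer[OF man hom F r(3) Ffx] by blast
      have HB: "H ` B \<subseteq> W'" unfolding Be
      proof clarify
        fix v :: 'n assume v: "v \<in> cball 0 1"
        then have "h v \<in> ball 0 \<epsilon>0" using h(3) \<epsilon>1(3) by blast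
        then have "f1 (h v) \<in> S0" using \<epsilon>0(2) by blast
        then have "e (f1 (h v)) \<in> W'" unfolding S0_def by blast
        moreover have "H (e v) = e (f1 (h v))" using H(3) v by simp
        ultimately show "H (e v) \<in> W'" by simp
      qed
      have "e ` cball 0 r \<subseteq> e ` ball 0 R" using r by (intro image_mono) auto
      then have Hr: "H \<in> rel_supp homeos (e ` ball 0 R)" unfolding rel_supp_def using H(1,2) by blast
      have cB: "compact B" unfolding Be using embed_props(3)[OF man hom, of 1] by simp
      obtain g where g: "g \<in> rel_supp G (e ` ball 0 R)" "g ` B \<subseteq> W'"
        using approx[OF dense_ball[OF man la hom R(2)] Hr cB oW' HB] by blast
      have "e ` ball 0 R \<subseteq> V" using eRV ball_subset_cball by blast
      then have "g \<in> rel_supp G V" using g(1) unfolding rel_supp_def by blast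
      moreover have "g ` U \<subseteq> W'" using g(2) B(2) by blast
      ultimately show "\<exists>g \<in> rel_supp G V. g ` U \<subseteq> W'" by blast
    qed
  next
    assume "\<exists>W \<in> D_of G. W \<noteq> {} \<and> W \<subseteq> V \<and>
       (\<forall>W' \<in> D_of G. W' \<noteq> {} \<and> W' \<subseteq> W \<longrightarrow> (\<exists>g \<in> rel_supp G V. g ` U \<subseteq> W'))"
    then obtain W where W: "W \<in> D_of G" "W \<noteq> {}" "W \<subseteq> V"
      and Wp: "\<forall>W' \<in> D_of G. W' \<noteq> {} \<and> W' \<subseteq> W \<longrightarrow> (\<exists>g \<in> rel_supp G V. g ` U \<subseteq> W')" by blast
    obtain e :: "'n \<Rightarrow> 'a" and e' where hom: "homeomorphism (cball 0 2) (e ` cball 0 2) e e'"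
      and eW: "e ` cball 0 2 \<subseteq> W"
      using embed_in_open[OF man Dopen[OF W(1)] W(2)] by blast
    obtain g0 where g0: "g0 \<in> rel_supp G (e ` ball 0 1)" "ext_supp g0 \<noteq> {}" "ext_supp g0 \<subseteq> e ` cball 0 1"
      using nontrivial[OF man la GH hom, of 1] by auto
    have c12: "e ` cball 0 1 \<subseteq> e ` cball 0 2" by (intro image_mono) auto
    have "ext_supp g0 \<in> D_of G" using g0(1) unfolding D_of_def rel_supp_def by blast
    moreover have "ext_supp g0 \<subseteq> W" using g0(3) c12 eW by blast
    ultimately obtain g where g: "g \<in> rel_supp G V" "g ` U \<subseteq> ext_supp g0" using Wp g0(2) by blast
    have "g \<in> homeos" using g(1) GH unfolding rel_supp_def by blast
    then obtain k where hk: "homeomorphism UNIV UNIV g k" unfolding homeos_def by blast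
    have hk2: "homeomorphism (e ` cball 0 2) (k ` e ` cball 0 2) k g"
      by (rule homeomorphism_of_subsets[OF homeomorphism_symD[OF hk]]) auto
    have hom2: "homeomorphism (cball 0 2) (k ` e ` cball 0 2) (k \<circ> e) (e' \<circ> g)"
      by (rule homeomorphism_compose[OF hom hk2])
    have "collared_ball TYPE('n) ((k \<circ> e) ` cball 0 1)"
      unfolding collared_ball_def using hom2 by (intro exI[of _ "k \<circ> e"] exI[of _ "e' \<circ> g"]) (simp add: image_comp)
    moreover have "U \<subseteq> (k \<circ> e) ` cball 0 1"
    proof
      fix x assume "x \<in> U"
      then have "g x \<in> e ` cball 0 1" using g(2) g0(3) by blast
      moreover have "k (g x) = x" using homeomorphism_apply1[OF hk] by simp
      ultimately show "x \<in> (k \<circ> e) ` cball 0 1" by (metis image_comp image_eqI)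
    qed
    moreover have "(k \<circ> e) ` cball 0 1 \<subseteq> interior V"
    proof clarify
      fix v :: 'n assume v: "v \<in> cball 0 1"
      then have yV: "e v \<in> V" using c12 eW W(3) by blast
      show "(k \<circ> e) v \<in> interior V"
      proof (rule ccontr)
        assume "(k \<circ> e) v \<notin> interior V"
        then have "k (e v) \<notin> V" using iV by simp
        then have "g (k (e v)) = k (e v)" using g(1) unfolding rel_supp_def by blast
        moreover have "g (k (e v)) = e v" using homeomorphism_apply2[OF hk] by simp
        ultimately show False using yV \<open>k (e v) \<notin> V\<close> by simp
      qed
    qed
    ultimately show "compactly_contained TYPE('n) U V" unfolding compactly_contained_def by blast
  qed
qed

end
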